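(* Let $E$ be a set and let $\mathcal{F}$ be a set of finite nonempty subsets of $E$ satisfying the strong circuit elimination axiom: for every $C_0,C_1\in\mathcal{F}$, $e\in C_0\cap C_1$ and $f\in C_0\triangle C_1$ there is $C\in\mathcal{F}$ with $f\in C\subseteq(C_0\cup C_1)\setminus\{e\}$. Then the set $\mathcal{C}$ of $\subseteq$-minimal elements of $\mathcal{F}$ is the set of circuits of a finitary matroid $M$ on $E$, and each $F\in\mathcal{F}$ is a scrawl of $M$, i.e. a union of circuits of $M$.
   Context: A finitary matroid is a matroid on a possibly infinite ground set all of whose circuits are finite. $X\triangle Y=(X\setminus Y)\cup(Y\setminus X)$. *)

theory Defs
  imports Main
begin

text \<open>Matroids on a possibly infinite ground set, via the independence axioms
of Bruhn, Diestel, Kriesell, Pendavingh and Wollan.\<close>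

definition maximal_indep :: "'a set set \<Rightarrow> 'a set \<Rightarrow> bool" where
  "maximal_indep Ind I \<longleftrightarrow> I \<in> Ind \<and> (\<forall>J\<in>Ind. I \<subseteq> J \<longrightarrow> J = I)"

definition matroid :: "'a set \<Rightarrow> 'a set set \<Rightarrow> bool" where
  "matroid E Ind \<longleftrightarrow>
     (\<forall>I\<in>Ind. I \<subseteq> E) \<and>
     {} \<in> Ind \<and>
     (\<forall>I\<in>Ind. \<forall>J. J \<subseteq> I \<longrightarrow> J \<in> Ind) \<and>
     (\<forall>I\<in>Ind. \<forall>I'. \<not> maximal_indep Ind I \<and> maximal_indep Ind I' \<longrightarrow>
        (\<exists>x \<in> I' - I. insert x I \<in> Ind)) \<and>
     (\<forall>I X. I \<in> Ind \<and> I \<subseteq> X \<and> X \<subseteq> E \<longrightarrow>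
        (\<exists>M. M \<in> Ind \<and> I \<subseteq> M \<and> M \<subseteq> X \<and>
             (\<forall>M'\<in>Ind. M \<subseteq> M' \<and> M' \<subseteq> X \<longrightarrow> M' = M)))"

definition circuits :: "'a set \<Rightarrow> 'a set set \<Rightarrow> 'a set set" where
  "circuits E Ind = {C. C \<subseteq> E \<and> C \<notin> Ind \<and> (\<forall>D. D \<subset> C \<longrightarrow> D \<in> Ind)}"

definition finitary_matroid :: "'a set \<Rightarrow> 'a set set \<Rightarrow> bool" where
  "finitary_matroid E Ind \<longleftrightarrow> matroid E Ind \<and> (\<forall>C\<in>circuits E Ind. finite C)"

definition scrawl :: "'a set \<Rightarrow> 'a set set \<Rightarrow> 'a set \<Rightarrow> bool" where
  "scrawl E Ind X \<longleftrightarrow> (\<exists>S. S \<subseteq> circuits E Ind \<and> X = \<Union>S)"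

definition strong_circuit_elimination :: "'a set set \<Rightarrow> bool" where
  "strong_circuit_elimination F \<longleftrightarrow>
     (\<forall>C0\<in>F. \<forall>C1\<in>F. \<forall>e f. e \<in> C0 \<inter> C1 \<and> f \<in> (C0 - C1) \<union> (C1 - C0) \<longrightarrow>
        (\<exists>C\<in>F. f \<in> C \<and> C \<subseteq> (C0 \<union> C1) - {e}))"

definition minimal_elements :: "'a set set \<Rightarrow> 'a set set" where
  "minimal_elements F = {C \<in> F. \<forall>D\<in>F. D \<subseteq> C \<longrightarrow> D = C}"

end

theory Submission
  imports Defs
begin

lemma scrawl_aux:
  assumes F: "\<forall>X\<in>F. X \<subseteq> E \<and> finite X \<and> X \<noteq> {}"
    and sce: "strong_circuit_elimination F"
  shows "\<forall>D\<in>F. f \<in> D \<longrightarrow> D \<subseteq> X \<longrightarrow> card D = n \<longrightarrow> (\<exists>C\<in>minimal_elements F. f \<in> C \<and> C \<subseteq> X)"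
proof (induction n rule: less_induct)
  case (less n)
  show ?case
  proof (intro ballI impI)
    fix D assume D: "D \<in> F" "f \<in> D" "D \<subseteq> X" "card D = n"
    show "\<exists>C\<in>minimal_elements F. f \<in> C \<and> C \<subseteq> X"
    proof (cases "D \<in> minimal_elements F")
      case True then show ?thesis using D by blast
    next
      case False
      then obtain D' where D': "D' \<in> F" "D' \<subseteq> D" "D' \<noteq> D"
        using D unfolding minimal_elements_def by blast
      have finD: "finite D" using F D by blast
      have cD': "card D' < card D" using D' finD by (meson psubsetI psubset_card_mono)
      show ?thesis
      proof (cases "f \<in> D'")
        case True
        have "\<exists>C\<in>minimal_elements F. f \<in> C \<and> C \<subseteq> X"
          using less.IH[of "card D'", OF _, rule_format, OF _ D'(1) True _ refl] cD' D D' by blast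
        then show ?thesis .
      next
        case False
        obtain e where e: "e \<in> D'" using F D' by blast
        obtain C where C: "C \<in> F" "f \<in> C" "C \<subseteq> (D \<union> D') - {e}"
        proof -
          have "e \<in> D \<inter> D'" "f \<in> (D - D') \<union> (D' - D)" using e D D' False by auto
          then show ?thesis using sce D(1) D'(1) that unfolding strong_circuit_elimination_def by blast
        qed
        have "C \<subseteq> D - {e}" using C D' by blast
        hence "card C < card D" using finD e D'
          by (metis Diff_subset card_Diff1_less card_mono order_le_less_trans subsetD finite_Diff)
        have "C \<subseteq> X" using `C \<subseteq> D - {e}` D by blast
        then show ?thesis using less.IH[of "card C", rule_format, OF _ C(1) C(2) _ refl] `card C < card D` D(4) by blast
      qed
    qed
  qed
qed

lemma aug_aux:
  assumes F: "\<forall>X\<in>F. X \<subseteq> E \<and> finite X \<and> X \<noteq> {}"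
    and sce: "strong_circuit_elimination F"
    and yI: "y \<notin> I" and yI': "y \<notin> I'"
    and Cx: "\<And>x. x \<in> I' - I \<Longrightarrow> \<exists>Cx\<in>F. x \<in> Cx \<and> Cx \<subseteq> insert x I"
    and noI: "\<And>C. C \<in> F \<Longrightarrow> \<not> C \<subseteq> insert y I"
  shows "\<forall>C\<in>F. y \<in> C \<longrightarrow> C \<subseteq> insert y (I \<union> I') \<longrightarrow> card (C - insert y I) = n \<longrightarrow> False"
proof (induction n rule: less_induct)
  case (less n)
  show ?case
  proof (intro ballI impI)
    fix C assume C: "C \<in> F" "y \<in> C" "C \<subseteq> insert y (I \<union> I')" "card (C - insert y I) = n"
    have finC: "finite C" using F C by blast
    obtain x where x: "x \<in> C - insert y I" using noI C by blast
    hence xI': "x \<in> I' - I" using C by blast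
    obtain Cx where Cx': "Cx \<in> F" "x \<in> Cx" "Cx \<subseteq> insert x I" using Cx[OF xI'] by blast
    have "y \<notin> Cx" using Cx' x yI by blast
    then obtain C' where C': "C' \<in> F" "y \<in> C'" "C' \<subseteq> (C \<union> Cx) - {x}"
    proof -
      have "x \<in> C \<inter> Cx" "y \<in> (C - Cx) \<union> (Cx - C)" using x Cx' C `y \<notin> Cx` by auto
      then show ?thesis using sce C(1) Cx'(1) that unfolding strong_circuit_elimination_def by blast
    qed
    have sub: "C' - insert y I \<subseteq> (C - insert y I) - {x}" using C' Cx' by blast
    have "card (C' - insert y I) < card (C - insert y I)"
      using sub x finC
      by (metis card_Diff1_less card_mono finite_Diff order_le_less_trans)
    moreover have "C' \<subseteq> insert y (I \<union> I')" using C' C Cx' xI' by blast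
    ultimately show False using less.IH[of "card (C' - insert y I)", rule_format, OF _ C'(1) C'(2) _ refl] C(4) by blast
  qed
qed

theorem lemma2p5:
  fixes E :: "'a set" and F :: "'a set set"
  assumes "\<forall>X\<in>F. X \<subseteq> E \<and> finite X \<and> X \<noteq> {}"
    and "strong_circuit_elimination F"
  shows "\<exists>Ind. finitary_matroid E Ind \<and> circuits E Ind = minimal_elements F \<and>
           (\<forall>X\<in>F. scrawl E Ind X)"
proof -
  note F = assms(1) and sce = assms(2)
  define Ind where "Ind = {I. I \<subseteq> E \<and> (\<forall>C\<in>F. \<not> C \<subseteq> I)}"
  have circ: "circuits E Ind = minimal_elements F"
  proof
    show "circuits E Ind \<subseteq> minimal_elements F"
    proof
      fix C assume "C \<in> circuits E Ind"
      hence C: "C \<subseteq> E" "C \<notin> Ind" "\<forall>D. D \<subset> C \<longrightarrow> D \<in> Ind" unfolding circuits_def by auto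
      then obtain D where D: "D \<in> F" "D \<subseteq> C" unfolding Ind_def by auto
      have "D = C" using C(3) D unfolding Ind_def by blast
      then show "C \<in> minimal_elements F" using D C(3) unfolding Ind_def minimal_elements_def by blast
    qed
  next
    show "minimal_elements F \<subseteq> circuits E Ind"
      using F unfolding minimal_elements_def circuits_def Ind_def by blast
  qed
  have scr: "\<forall>X\<in>F. scrawl E Ind X"
  proof
    fix X assume X: "X \<in> F"
    have "\<forall>f\<in>X. \<exists>C\<in>minimal_elements F. f \<in> C \<and> C \<subseteq> X"
      using scrawl_aux[OF F sce] X by blast
    hence "X = \<Union>{C\<in>minimal_elements F. C \<subseteq> X}" by blast
    moreover have "{C\<in>minimal_elements F. C \<subseteq> X} \<subseteq> circuits E Ind" using circ by blast
    ultimately show "scrawl E Ind X" unfolding scrawl_def by (intro exI[of _ "{C\<in>minimal_elements F. C \<subseteq> X}"]) simp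
  qed
  have m1: "\<forall>I\<in>Ind. I \<subseteq> E" unfolding Ind_def by auto
  have m2: "{} \<in> Ind" using F unfolding Ind_def by auto
  have m3: "\<forall>I\<in>Ind. \<forall>J. J \<subseteq> I \<longrightarrow> J \<in> Ind" unfolding Ind_def by blast
  have m4: "\<forall>I\<in>Ind. \<forall>I'. \<not> maximal_indep Ind I \<and> maximal_indep Ind I' \<longrightarrow>
        (\<exists>x \<in> I' - I. insert x I \<in> Ind)"
  proof (intro ballI allI impI)
    fix I I' assume I: "I \<in> Ind" and h: "\<not> maximal_indep Ind I \<and> maximal_indep Ind I'"
    then obtain J where J: "J \<in> Ind" "I \<subseteq> J" "J \<noteq> I" unfolding maximal_indep_def by blast
    then obtain y where y: "y \<in> J" "y \<notin> I" by blast
    have yInd: "insert y I \<in> Ind" using m3 J y by blast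
    have I': "I' \<in> Ind" "\<forall>J\<in>Ind. I' \<subseteq> J \<longrightarrow> J = I'" using h unfolding maximal_indep_def by auto
    show "\<exists>x \<in> I' - I. insert x I \<in> Ind"
    proof (rule ccontr)
      assume na: "\<not> (\<exists>x \<in> I' - I. insert x I \<in> Ind)"
      hence yI': "y \<notin> I'" using y yInd by blast
      have yE: "y \<in> E" using J y m1 by blast
      have "insert y I' \<notin> Ind" using I' yI' by blast
      then obtain C where C: "C \<in> F" "C \<subseteq> insert y I'" using yE I' unfolding Ind_def by auto
      have yC: "y \<in> C" using C I' unfolding Ind_def by blast
      have Cx: "\<exists>Cx\<in>F. x \<in> Cx \<and> Cx \<subseteq> insert x I" if x: "x \<in> I' - I" for x
      proof -
        have "insert x I \<subseteq> E" using x I I' m1 by blast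
        then obtain Cx where "Cx \<in> F" "Cx \<subseteq> insert x I" using na x unfolding Ind_def by auto
        moreover have "x \<in> Cx" using calculation I unfolding Ind_def by blast
        ultimately show ?thesis by blast
      qed
      have noI: "\<not> C' \<subseteq> insert y I" if "C' \<in> F" for C'
        using yInd that unfolding Ind_def by blast
      show False using aug_aux[OF F sce y(2) yI' Cx noI] C yC by blast
    qed
  qed
  have m5: "\<forall>I X. I \<in> Ind \<and> I \<subseteq> X \<and> X \<subseteq> E \<longrightarrow>
        (\<exists>M. M \<in> Ind \<and> I \<subseteq> M \<and> M \<subseteq> X \<and>
             (\<forall>M'\<in>Ind. M \<subseteq> M' \<and> M' \<subseteq> X \<longrightarrow> M' = M))"
  proof (intro allI impI)
    fix I X assume h: "I \<in> Ind \<and> I \<subseteq> X \<and> X \<subseteq> E"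
    define A where "A = {M\<in>Ind. I \<subseteq> M \<and> M \<subseteq> X}"
    have "\<forall>C\<in>chains A. \<exists>U\<in>A. \<forall>Y\<in>C. Y \<subseteq> U"
    proof
      fix Ch assume Ch: "Ch \<in> chains A"
      show "\<exists>U\<in>A. \<forall>Y\<in>Ch. Y \<subseteq> U"
      proof (cases "Ch = {}")
        case True then show ?thesis using h unfolding A_def by blast
      next
        case False
        have sc: "subset.chain A Ch" using Ch by (simp add: chains_alt_def)
        hence ChA: "Ch \<subseteq> A" by (simp add: subset.chain_def)
        have "\<Union>Ch \<in> A"
        proof -
          have "\<forall>C\<in>F. \<not> C \<subseteq> \<Union>Ch"
          proof (intro ballI notI)
            fix C assume C: "C \<in> F" "C \<subseteq> \<Union>Ch"
            have "finite C" using F C by blast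
            then obtain B where "B \<in> Ch" "C \<subseteq> B"
              using finite_subset_Union_chain[OF _ C(2) False sc] by blast
            then show False using ChA C unfolding A_def Ind_def by blast
          qed
          then show ?thesis using ChA False h unfolding A_def Ind_def by blast
        qed
        then show ?thesis by blast
      qed
    qed
    then obtain M where "M \<in> A" "\<forall>Y\<in>A. M \<subseteq> Y \<longrightarrow> Y = M" using Zorn_Lemma2[of A] by blast
    then show "\<exists>M. M \<in> Ind \<and> I \<subseteq> M \<and> M \<subseteq> X \<and>
             (\<forall>M'\<in>Ind. M \<subseteq> M' \<and> M' \<subseteq> X \<longrightarrow> M' = M)"
      unfolding A_def by (intro exI[of _ M]) auto
  qed
  have "matroid E Ind" unfolding matroid_def using m1 m2 m3 m4 m5 by (intro conjI)
  moreover have "\<forall>C\<in>circuits E Ind. finite C" using F unfolding circ minimal_elements_def by blast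
  ultimately have "finitary_matroid E Ind" unfolding finitary_matroid_def by blast
  then show ?thesis using circ scr by (intro exI[of _ Ind]) simp
qed

end
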